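(* Let $\Bbbk$ be a field of characteristic $0$, $n\ge2$, and let $(A,\mu,\alpha)$ be a multiplicative $n$-ary totally Hom-associative algebra over $\Bbbk$. Then for each integer $k\ge0$, $A_k=(A,\alpha^{2^k-1}\circ\mu,\alpha^{2^k})$ (all twisting maps equal to $\alpha^{2^k}$) is a multiplicative $n$-ary totally Hom-associative algebra.
   Context: An $n$-ary Hom-algebra $(V,\mu,(\alpha_1,\ldots,\alpha_{n-1}))$ is a vector space $V$ with an $n$-linear map $\mu$ (written $\mu(a_1,\ldots,a_n)=(a_1\cdots a_n)$) and linear maps $\alpha_i\colon V\to V$. It is multiplicative if all $\alpha_i$ equal one map $\alpha$ and $\alpha\circ\mu=\mu\circ\alpha^{\otimes n}$; such a Hom-algebra is written $(V,\mu,\alpha)$. $\alpha^m$ denotes the $m$-fold composite, $\alpha^0=\mathrm{Id}$. It is $n$-ary totally Hom-associative if for every $i\in\{1,\ldots,n-1\}$ and all $a_1,\ldots,a_{2n-1}$: $(\alpha_1(a_1),\ldots,\alpha_{i-1}(a_{i-1}),(a_i\cdots a_{i+n-1}),\alpha_i(a_{i+n}),\ldots,\alpha_{n-1}(a_{2n-1}))=(\alpha_1(a_1),\ldots,\alpha_i(a_i),(a_{i+1}\cdots a_{i+n}),\alpha_{i+1}(a_{i+n+1}),\ldots,\alpha_{n-1}(a_{2n-1}))$. *)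

theory Defs
  imports Main "HOL.Vector_Spaces"
begin

text \<open>An n-ary operation on V is modelled as a function on lists; only its values on
lists of length n matter.\<close>

definition nlinear :: "('k::field \<Rightarrow> 'v::ab_group_add \<Rightarrow> 'v) \<Rightarrow> nat \<Rightarrow> ('v list \<Rightarrow> 'v) \<Rightarrow> bool" where
  "nlinear scale n mu \<longleftrightarrow>
     (\<forall>xs i. length xs = n \<longrightarrow> i < n \<longrightarrow>
        Vector_Spaces.linear scale scale (\<lambda>x. mu (xs[i := x])))"

definition multiplicative_hom_algebra ::
  "('k::field \<Rightarrow> 'v::ab_group_add \<Rightarrow> 'v) \<Rightarrow> nat \<Rightarrow> ('v list \<Rightarrow> 'v) \<Rightarrow> ('v \<Rightarrow> 'v) \<Rightarrow> bool" where
  "multiplicative_hom_algebra scale n mu alpha \<longleftrightarrow>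
     nlinear scale n mu \<and> Vector_Spaces.linear scale scale alpha \<and>
     (\<forall>xs. length xs = n \<longrightarrow> alpha (mu xs) = mu (map alpha xs))"

text \<open>The paper's index i \<in> {1..n-1} corresponds to j = i - 1 \<in> {0..<n-1}; the list
a has length 2n-1 (a_1..a_{2n-1} is a!0..a!(2n-2)).\<close>
definition totally_hom_associative :: "nat \<Rightarrow> ('v list \<Rightarrow> 'v) \<Rightarrow> ('v \<Rightarrow> 'v) \<Rightarrow> bool" where
  "totally_hom_associative n mu alpha \<longleftrightarrow>
     (\<forall>j a. j < n - 1 \<longrightarrow> length a = 2 * n - 1 \<longrightarrow>
        mu (map alpha (take j a) @ [mu (take n (drop j a))] @ map alpha (drop (j + n) a)) =
        mu (map alpha (take (Suc j) a) @ [mu (take n (drop (Suc j) a))] @ map alpha (drop (Suc j + n) a)))"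

end

theory Submission
  imports Defs
begin

lemma funpow_linear:
  assumes "vector_space scale" "Vector_Spaces.linear scale scale f"
  shows "Vector_Spaces.linear scale scale (f ^^ q)"
proof (induction q)
  case 0
  then show ?case using vector_space.linear_id[OF assms(1)] by (simp add: id_def)
next
  case (Suc q)
  then show ?case using Vector_Spaces.linear_compose[OF Suc assms(2)] by (simp add: comp_def)
qed

lemma funpow_mu:
  assumes "\<forall>xs. length xs = n \<longrightarrow> alpha (mu xs) = mu (map alpha xs)" "length xs = n"
  shows "mu (map (alpha ^^ q) xs) = (alpha ^^ q) (mu xs)"
proof (induction q)
  case 0
  then show ?case by simp
next
  case (Suc q)
  have "mu (map (alpha ^^ Suc q) xs) = mu (map alpha (map (alpha ^^ q) xs))"
    by (simp add: comp_def)
  also have "\<dots> = alpha (mu (map (alpha ^^ q) xs))" using assms by simp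
  finally show ?case using Suc by (simp add: comp_def)
qed

lemma general:
  fixes scale :: "'k::field \<Rightarrow> 'v::ab_group_add \<Rightarrow> 'v"
  assumes vs: "vector_space scale"
    and n2: "n \<ge> 2"
    and mh: "multiplicative_hom_algebra scale n mu alpha"
    and ta: "totally_hom_associative n mu alpha"
  shows "multiplicative_hom_algebra scale n (\<lambda>xs. (alpha ^^ q) (mu xs)) (alpha ^^ Suc q) \<and>
         totally_hom_associative n (\<lambda>xs. (alpha ^^ q) (mu xs)) (alpha ^^ Suc q)"
proof -
  have nl: "nlinear scale n mu" and la: "Vector_Spaces.linear scale scale alpha"
    and cm: "\<forall>xs. length xs = n \<longrightarrow> alpha (mu xs) = mu (map alpha xs)"
    using mh unfolding multiplicative_hom_algebra_def by auto
  have lq: "\<And>q. Vector_Spaces.linear scale scale (alpha ^^ q)" using funpow_linear[OF vs la] .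
  have cq: "\<And>xs q. length xs = n \<Longrightarrow> mu (map (alpha ^^ q) xs) = (alpha ^^ q) (mu xs)"
    using funpow_mu[OF cm] .
  have A: "nlinear scale n (\<lambda>xs. (alpha ^^ q) (mu xs))"
    unfolding nlinear_def
  proof (intro allI impI)
    fix xs :: "'v list" and i assume "length xs = n" "i < n"
    then have "Vector_Spaces.linear scale scale (\<lambda>x. mu (xs[i := x]))"
      using nl unfolding nlinear_def by auto
    from Vector_Spaces.linear_compose[OF this lq[of q]]
    show "Vector_Spaces.linear scale scale (\<lambda>x. (alpha ^^ q) (mu (xs[i := x])))"
      by (simp add: comp_def)
  qed
  have B: "\<forall>xs. length xs = n \<longrightarrow> (alpha ^^ Suc q) ((alpha ^^ q) (mu xs)) =
              (alpha ^^ q) (mu (map (alpha ^^ Suc q) xs))"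
  proof (intro allI impI)
    fix xs :: "'v list" assume l: "length xs = n"
    have "(alpha ^^ Suc q) ((alpha ^^ q) (mu xs)) = (alpha ^^ q) ((alpha ^^ Suc q) (mu xs))"
      by (metis comp_apply funpow_add add.commute)
    also have "\<dots> = (alpha ^^ q) (mu (map (alpha ^^ Suc q) xs))" using cq[OF l, of "Suc q"] by simp
    finally show "(alpha ^^ Suc q) ((alpha ^^ q) (mu xs)) = (alpha ^^ q) (mu (map (alpha ^^ Suc q) xs))" .
  qed
  have C: "totally_hom_associative n (\<lambda>xs. (alpha ^^ q) (mu xs)) (alpha ^^ Suc q)"
    unfolding totally_hom_associative_def
  proof (intro allI impI)
    fix j and a :: "'v list" assume j: "j < n - 1" and la: "length a = 2 * n - 1"
    have sq: "\<And>x. (alpha ^^ Suc q) x = (alpha ^^ q) (alpha x)"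
      by (metis comp_apply funpow_Suc_right)
    have sq2: "\<And>x. alpha ((alpha ^^ q) x) = (alpha ^^ q) (alpha x)"
      by (metis comp_apply funpow_Suc_right funpow.simps(2))
    have L1: "length (map alpha (take j a) @ [mu (take n (drop j a))] @ map alpha (drop (j + n) a)) = n"
      using j la n2 by simp
    have L2: "length (map alpha (take (Suc j) a) @ [mu (take n (drop (Suc j) a))] @ map alpha (drop (Suc j + n) a)) = n"
      using j la n2 by simp
    have E1: "map (alpha ^^ Suc q) (take j a) @ [(alpha ^^ q) (mu (take n (drop j a)))] @ map (alpha ^^ Suc q) (drop (j + n) a)
        = map (alpha ^^ q) (map alpha (take j a) @ [mu (take n (drop j a))] @ map alpha (drop (j + n) a))"
      by (simp add: sq2)
    have E2: "map (alpha ^^ Suc q) (take (Suc j) a) @ [(alpha ^^ q) (mu (take n (drop (Suc j) a)))] @ map (alpha ^^ Suc q) (drop (Suc j + n) a)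
        = map (alpha ^^ q) (map alpha (take (Suc j) a) @ [mu (take n (drop (Suc j) a))] @ map alpha (drop (Suc j + n) a))"
      by (simp add: sq2 del: take_Suc)
    have T: "mu (map alpha (take j a) @ [mu (take n (drop j a))] @ map alpha (drop (j + n) a)) =
        mu (map alpha (take (Suc j) a) @ [mu (take n (drop (Suc j) a))] @ map alpha (drop (Suc j + n) a))"
      using ta j la unfolding totally_hom_associative_def by blast
    show "(alpha ^^ q) (mu (map (alpha ^^ Suc q) (take j a) @ [(alpha ^^ q) (mu (take n (drop j a)))] @ map (alpha ^^ Suc q) (drop (j + n) a))) =
        (alpha ^^ q) (mu (map (alpha ^^ Suc q) (take (Suc j) a) @ [(alpha ^^ q) (mu (take n (drop (Suc j) a)))] @ map (alpha ^^ Suc q) (drop (Suc j + n) a)))"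
      unfolding E1 E2 cq[OF L1] cq[OF L2] T ..
  qed
  show ?thesis using A B C lq[of "Suc q"] unfolding multiplicative_hom_algebra_def by auto
qed

theorem corollary2p6:
  fixes scale :: "'k::field_char_0 \<Rightarrow> 'v::ab_group_add \<Rightarrow> 'v"
    and n :: nat and mu :: "'v list \<Rightarrow> 'v" and alpha :: "'v \<Rightarrow> 'v"
  assumes "vector_space scale"
    and "n \<ge> 2"
    and "multiplicative_hom_algebra scale n mu alpha"
    and "totally_hom_associative n mu alpha"
  shows "\<forall>k::nat.
           multiplicative_hom_algebra scale n (\<lambda>xs. (alpha ^^ (2 ^ k - 1)) (mu xs)) (alpha ^^ (2 ^ k)) \<and>
           totally_hom_associative n (\<lambda>xs. (alpha ^^ (2 ^ k - 1)) (mu xs)) (alpha ^^ (2 ^ k))"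
proof
  fix k :: nat
  have e: "(2::nat) ^ k = Suc (2 ^ k - 1)" by simp
  show "multiplicative_hom_algebra scale n (\<lambda>xs. (alpha ^^ (2 ^ k - 1)) (mu xs)) (alpha ^^ (2 ^ k)) \<and>
           totally_hom_associative n (\<lambda>xs. (alpha ^^ (2 ^ k - 1)) (mu xs)) (alpha ^^ (2 ^ k))"
    apply (subst (2 4) e)
    using general[OF assms] .
qed

end
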